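(* Let $(\Omega,\Sigma,\mu;\phi)$ be a bimeasurable measure preserving dynamical system such that for every $A\in\Sigma$ the sequence $(\phi^n(A))_{n\in\mathbb{N}}$ converges in the measure algebra $\Sigma/\sim$. Then $\Sigma_\infty\subseteq\overline{\Sigma_{\mathrm{inv}}}$.
   Context: A measure preserving dynamical system $(\Omega,\Sigma,\mu;\phi)$ is a probability space with a measurable map $\phi\colon\Omega\to\Omega$ such that $\mu(\phi^{-1}(A))=\mu(A)$ for all $A\in\Sigma$; it is bimeasurable if $\phi^{-1}(A),\phi(A)\in\Sigma$ for all $A\in\Sigma$. $A\sim B$ iff $\mu(A\triangle B)=0$; $\Sigma/\sim$ is the set of equivalence classes with metric $d(A,B)=\mu(A\triangle B)$. $\Sigma_n=\{\phi^{-n}(A):A\in\Sigma\}$, $\Sigma_\infty=\bigcap_{n\in\mathbb{N}}\Sigma_n$, $\Sigma_{\mathrm{inv}}=\{A\in\Sigma:\phi^{-1}(A)=A\}$, and $\overline{\Sigma_{\mathrm{inv}}}=\{A\in\Sigma:\exists B\in\Sigma_{\mathrm{inv}},\ \mu(A\triangle B)=0\}$. *)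

theory Defs
  imports "HOL-Probability.Probability"
begin

definition mpds :: "'a measure \<Rightarrow> ('a \<Rightarrow> 'a) \<Rightarrow> bool" where
  "mpds M \<phi> \<longleftrightarrow> prob_space M \<and> \<phi> \<in> measurable M M \<and>
     (\<forall>A\<in>sets M. emeasure M (\<phi> -` A \<inter> space M) = emeasure M A)"

definition bimeasurable :: "'a measure \<Rightarrow> ('a \<Rightarrow> 'a) \<Rightarrow> bool" where
  "bimeasurable M \<phi> \<longleftrightarrow> (\<forall>A\<in>sets M. \<phi> -` A \<inter> space M \<in> sets M \<and> \<phi> ` A \<in> sets M)"

definition symdiff :: "'a set \<Rightarrow> 'a set \<Rightarrow> 'a set" where
  "symdiff A B = (A - B) \<union> (B - A)"

text \<open>Convergence in the measure algebra Sigma/~ with metric d(A,B) = mu(A symdiff B).\<close>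
definition converges_measure_algebra :: "'a measure \<Rightarrow> (nat \<Rightarrow> 'a set) \<Rightarrow> bool" where
  "converges_measure_algebra M S \<longleftrightarrow>
     (\<exists>B\<in>sets M. (\<lambda>n. measure M (symdiff (S n) B)) \<longlonglongrightarrow> 0)"

definition Sigma_n :: "'a measure \<Rightarrow> ('a \<Rightarrow> 'a) \<Rightarrow> nat \<Rightarrow> 'a set set" where
  "Sigma_n M \<phi> n = {(\<phi> ^^ n) -` A \<inter> space M | A. A \<in> sets M}"

definition Sigma_infty :: "'a measure \<Rightarrow> ('a \<Rightarrow> 'a) \<Rightarrow> 'a set set" where
  "Sigma_infty M \<phi> = (\<Inter>n. Sigma_n M \<phi> n)"

definition Sigma_inv :: "'a measure \<Rightarrow> ('a \<Rightarrow> 'a) \<Rightarrow> 'a set set" where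
  "Sigma_inv M \<phi> = {A \<in> sets M. \<phi> -` A \<inter> space M = A}"

definition Sigma_inv_closure :: "'a measure \<Rightarrow> ('a \<Rightarrow> 'a) \<Rightarrow> 'a set set" where
  "Sigma_inv_closure M \<phi> = {A \<in> sets M. \<exists>B\<in>Sigma_inv M \<phi>. measure M (symdiff A B) = 0}"

end

theory Submission
  imports Defs
begin

lemma d_tri:
  assumes "finite_measure M" "X \<in> sets M" "Y \<in> sets M" "Z \<in> sets M"
  shows "measure M (symdiff X Z) \<le> measure M (symdiff X Y) + measure M (symdiff Y Z)"
proof -
  interpret finite_measure M by fact
  have s: "\<And>P Q. P \<in> sets M \<Longrightarrow> Q \<in> sets M \<Longrightarrow> symdiff P Q \<in> sets M"
    unfolding symdiff_def by auto
  have "measure M (symdiff X Z) \<le> measure M (symdiff X Y \<union> symdiff Y Z)"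
    by (rule finite_measure_mono) (auto simp: symdiff_def intro!: sets.Un s assms)
  also have "\<dots> \<le> measure M (symdiff X Y) + measure M (symdiff Y Z)"
    by (rule measure_subadditive) (auto intro!: s assms)
  finally show ?thesis .
qed

lemma pre_limsup: fixes pre :: "nat \<Rightarrow> 'a set \<Rightarrow> 'a set" and S :: "'a set"
  assumes pre1: "\<And>X. pre 1 X = \<phi> -` X \<inter> S"
  shows "pre 1 (\<Union>m. \<Inter>n\<in>{m..}. pre n C) = (\<Union>m. \<Inter>n\<in>{m..}. pre 1 (pre n C))"
proof (rule set_eqI)
  fix x
  have 1: "x \<in> pre 1 (\<Union>m. \<Inter>n\<in>{m..}. pre n C) \<longleftrightarrow> x \<in> S \<and> (\<exists>m. \<forall>n\<ge>m. \<phi> x \<in> pre n C)"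
    unfolding pre1 by (simp add: atLeast_def) blast
  have 2: "x \<in> (\<Union>m. \<Inter>n\<in>{m..}. pre 1 (pre n C)) \<longleftrightarrow> x \<in> S \<and> (\<exists>m. \<forall>n\<ge>m. \<phi> x \<in> pre n C)"
    unfolding pre1 by (auto; blast)
  show "x \<in> pre 1 (\<Union>m. \<Inter>n\<in>{m..}. pre n C) \<longleftrightarrow> x \<in> (\<Union>m. \<Inter>n\<in>{m..}. pre 1 (pre n C))"
    using 1 2 by simp
qed

theorem lemma3p4:
  fixes M :: "'a measure" and \<phi> :: "'a \<Rightarrow> 'a"
  assumes "mpds M \<phi>"
    and "bimeasurable M \<phi>"
    and "\<forall>A\<in>sets M. converges_measure_algebra M (\<lambda>n. (\<phi> ^^ n) ` A)"
  shows "Sigma_infty M \<phi> \<subseteq> Sigma_inv_closure M \<phi>"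
proof
  fix A assume A: "A \<in> Sigma_infty M \<phi>"
  interpret prob_space M using assms(1) unfolding mpds_def by auto
  have fm: "finite_measure M" by unfold_locales
  have phim: "\<phi> \<in> measurable M M" and pres: "\<And>X. X \<in> sets M \<Longrightarrow> emeasure M (\<phi> -` X \<inter> space M) = emeasure M X"
    using assms(1) unfolding mpds_def by auto
  have phisp: "\<And>x. x \<in> space M \<Longrightarrow> \<phi> x \<in> space M" using phim by (auto simp: measurable_def)
  have funsp: "\<And>n x. x \<in> space M \<Longrightarrow> (\<phi>^^n) x \<in> space M"
  proof -
    fix n x assume "x \<in> space M" then show "(\<phi>^^n) x \<in> space M"
      by (induction n) (auto simp: phisp)
  qed
  define pre where "pre = (\<lambda>n X. (\<phi>^^n) -` X \<inter> space M)"
  define d where "d = (\<lambda>X Y. measure M (symdiff X Y))"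
  have tri: "\<And>X Y Z. X \<in> sets M \<Longrightarrow> Y \<in> sets M \<Longrightarrow> Z \<in> sets M \<Longrightarrow> d X Z \<le> d X Y + d Y Z"
    unfolding d_def using d_tri[OF fm] by blast
  have dnn: "\<And>X Y. d X Y \<ge> 0" unfolding d_def by simp
  have dsym: "\<And>X Y. d X Y = d Y X" unfolding d_def symdiff_def by (simp add: Un_commute)
  have symd_s: "\<And>P Q. P \<in> sets M \<Longrightarrow> Q \<in> sets M \<Longrightarrow> symdiff P Q \<in> sets M"
    unfolding symdiff_def by auto
  have pre_Suc: "\<And>n X. pre (Suc n) X = pre 1 (pre n X)"
    unfolding pre_def by (auto simp: funpow_swap1 phisp)
  have pre_Suc': "\<And>n X. pre (Suc n) X = pre n (pre 1 X)"
    unfolding pre_def by (auto simp: funsp funpow_swap1)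
  have pre1: "\<And>X. pre 1 X = \<phi> -` X \<inter> space M" unfolding pre_def by simp
  have pre_sets: "\<And>n X. X \<in> sets M \<Longrightarrow> pre n X \<in> sets M"
  proof -
    fix n X assume X: "X \<in> sets M" show "pre n X \<in> sets M"
    proof (induction n)
      case 0 then show ?case using X by (simp add: pre_def)
    next
      case (Suc n) then show ?case using phim unfolding pre_Suc pre1 by (auto simp: measurable_def)
    qed
  qed
  have pre_meas: "\<And>n X. X \<in> sets M \<Longrightarrow> measure M (pre n X) = measure M X"
  proof -
    fix n X assume X: "X \<in> sets M" show "measure M (pre n X) = measure M X"
    proof (induction n)
      case 0 then show ?case using X sets.sets_into_space by (simp add: pre_def Int_absorb2)
    next
      case (Suc n) then show ?case unfolding pre_Suc pre1 measure_def
        using pres[OF pre_sets[OF X, of n]] by simp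
    qed
  qed
  have pre_symd: "\<And>n X Y. pre n (symdiff X Y) = symdiff (pre n X) (pre n Y)"
    unfolding pre_def symdiff_def by auto
  have dpre: "\<And>n X Y. X \<in> sets M \<Longrightarrow> Y \<in> sets M \<Longrightarrow> d (pre n X) (pre n Y) = d X Y"
    unfolding d_def by (metis pre_symd pre_meas symd_s)
  have "\<forall>n. \<exists>B\<in>sets M. A = pre n B"
    using A unfolding Sigma_infty_def Sigma_n_def pre_def by blast
  then obtain B where B: "\<And>n. B n \<in> sets M" "\<And>n. A = pre n (B n)" by metis
  have Asets: "A \<in> sets M" using B(2)[of 0] B(1)[of 0] pre_sets by metis
  have Asp: "A \<subseteq> space M" using Asets sets.sets_into_space by auto
  define I where "I = (\<lambda>n. (\<phi>^^n) ` A)"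
  have Isets: "\<And>n. I n \<in> sets M"
  proof -
    fix n show "I n \<in> sets M"
    proof (induction n)
      case 0 then show ?case using Asets by (simp add: I_def)
    next
      case (Suc n)
      have "I (Suc n) = \<phi> ` I n" unfolding I_def by (simp add: image_comp)
      then show ?case using Suc assms(2) unfolding bimeasurable_def by auto
    qed
  qed
  have preI: "\<And>n. pre n (I n) = A"
  proof -
    fix n
    show "pre n (I n) = A"
    proof
      show "A \<subseteq> pre n (I n)" using Asp unfolding pre_def I_def by auto
      show "pre n (I n) \<subseteq> A"
      proof
        fix x assume "x \<in> pre n (I n)"
        then obtain a where a: "a \<in> A" "(\<phi>^^n) x = (\<phi>^^n) a" "x \<in> space M"
          unfolding pre_def I_def by auto
        have "(\<phi>^^n) a \<in> B n" using a(1) B(2)[of n] unfolding pre_def by auto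
        then have "x \<in> pre n (B n)" using a unfolding pre_def by auto
        then show "x \<in> A" using B(2)[of n] by simp
      qed
    qed
  qed
  obtain C where C: "C \<in> sets M" "(\<lambda>n. d (I n) C) \<longlonglongrightarrow> 0"
    using assms(3) Asets unfolding converges_measure_algebra_def d_def I_def by blast
  have step0: "\<And>n. d (pre 1 (I (Suc n))) (I n) = 0"
  proof -
    fix n
    have "d (pre n (pre 1 (I (Suc n)))) (pre n (I n)) = 0"
      using preI[of "Suc n"] preI[of n] unfolding pre_Suc' by (simp add: d_def symdiff_def)
    then show "d (pre 1 (I (Suc n))) (I n) = 0"
      using dpre pre_sets Isets by metis
  qed
  have Cinv: "d C (pre 1 C) = 0"
  proof -
    have le: "\<And>n. d C (pre 1 C) \<le> d (I n) C + d (I (Suc n)) C"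
    proof -
      fix n
      have "d C (pre 1 C) \<le> d C (I n) + d (I n) (pre 1 C)"
        by (rule tri) (auto simp: C Isets pre_sets)
      also have "d (I n) (pre 1 C) \<le> d (I n) (pre 1 (I (Suc n))) + d (pre 1 (I (Suc n))) (pre 1 C)"
        by (rule tri) (auto simp: C Isets pre_sets)
      also have "d (pre 1 (I (Suc n))) (pre 1 C) = d (I (Suc n)) C"
        by (rule dpre) (auto simp: C Isets)
      finally show "d C (pre 1 C) \<le> d (I n) C + d (I (Suc n)) C"
        using step0[of n] dsym by (metis add.commute add_0 add_le_cancel_left)
    qed
    have lim: "(\<lambda>n. d (I n) C + d (I (Suc n)) C) \<longlonglongrightarrow> 0"
      using tendsto_add[OF C(2) LIMSEQ_Suc[OF C(2)]] by simp
    have "d C (pre 1 C) \<le> 0" using LIMSEQ_le_const[OF lim] le by blast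
    then show ?thesis using dnn by (meson antisym)
  qed
  have preC: "\<And>n. d (pre n C) C = 0"
  proof -
    fix n show "d (pre n C) C = 0"
    proof (induction n)
      case 0
      then show ?case using C sets.sets_into_space
        by (simp add: pre_def d_def symdiff_def Int_absorb2)
    next
      case (Suc n)
      have "d (pre (Suc n) C) C \<le> d (pre n (pre 1 C)) (pre n C) + d (pre n C) C"
        unfolding pre_Suc' by (rule tri) (auto simp: C pre_sets)
      also have "d (pre n (pre 1 C)) (pre n C) = 0"
        using dpre[of "pre 1 C" C n] Cinv dsym C pre_sets by metis
      finally show ?case using Suc dnn by (metis antisym add_0)
    qed
  qed
  have AC: "d A C = 0"
  proof -
    have le: "\<And>n. d A C \<le> d (I n) C"
    proof -
      fix n
      have "d A C \<le> d A (pre n C) + d (pre n C) C" by (rule tri) (auto simp: C Asets pre_sets)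
      also have "d A (pre n C) = d (I n) C"
        using dpre[of "I n" C n] preI[of n] Isets C by simp
      finally show "d A C \<le> d (I n) C" using preC[of n] by simp
    qed
    have "d A C \<le> 0" using LIMSEQ_le_const[OF C(2)] le by blast
    then show ?thesis using dnn by (meson antisym)
  qed
  define D where "D = (\<Union>m. \<Inter>n\<in>{m..}. pre n C)"
  have Dsets: "D \<in> sets M" unfolding D_def
    by (intro sets.countable_UN sets.countable_INT) (auto simp: pre_sets C)
  have "pre 1 D = (\<Union>m. \<Inter>n\<in>{m..}. pre 1 (pre n C))"
  proof (rule set_eqI)
    fix x
    have 1: "x \<in> pre 1 D \<longleftrightarrow> x \<in> space M \<and> (\<exists>m. \<forall>n\<ge>m. \<phi> x \<in> pre n C)"
      unfolding pre1 D_def by (simp add: atLeast_def) blast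
    have 2: "x \<in> (\<Union>m. \<Inter>n\<in>{m..}. pre 1 (pre n C)) \<longleftrightarrow> x \<in> space M \<and> (\<exists>m. \<forall>n\<ge>m. \<phi> x \<in> pre n C)"
      unfolding pre1 by (auto; blast)
    show "x \<in> pre 1 D \<longleftrightarrow> x \<in> (\<Union>m. \<Inter>n\<in>{m..}. pre 1 (pre n C))"
      using 1 2 by simp
  qed
  also have "\<dots> = (\<Union>m. \<Inter>n\<in>{m..}. pre (Suc n) C)"
    by (simp only: pre_Suc[symmetric])
  also have "\<dots> = D"
  proof
    show "(\<Union>m. \<Inter>n\<in>{m..}. pre (Suc n) C) \<subseteq> D" unfolding D_def
    proof
      fix x assume "x \<in> (\<Union>m. \<Inter>n\<in>{m..}. pre (Suc n) C)"
      then obtain m where m: "\<And>n. n \<ge> m \<Longrightarrow> x \<in> pre (Suc n) C" by auto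
      have "\<And>n. n \<ge> Suc m \<Longrightarrow> x \<in> pre n C"
      proof -
        fix n assume "n \<ge> Suc m"
        then obtain k where "n = Suc k" "k \<ge> m" by (cases n) auto
        then show "x \<in> pre n C" using m by simp
      qed
      then show "x \<in> (\<Union>m. \<Inter>n\<in>{m..}. pre n C)" by blast
    qed
    show "D \<subseteq> (\<Union>m. \<Inter>n\<in>{m..}. pre (Suc n) C)"
    proof
      fix x assume "x \<in> D"
      then obtain m where m: "\<And>n. n \<ge> m \<Longrightarrow> x \<in> pre n C" unfolding D_def by auto
      then have "\<forall>n\<in>{m..}. x \<in> pre (Suc n) C" by simp
      then show "x \<in> (\<Union>m. \<Inter>n\<in>{m..}. pre (Suc n) C)" by blast
    qed
  qed
  finally have Dinv: "\<phi> -` D \<inter> space M = D" using pre1 by simp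
  have "symdiff D C \<subseteq> (\<Union>n. symdiff (pre n C) C)"
  proof
    fix x assume x: "x \<in> symdiff D C"
    show "x \<in> (\<Union>n. symdiff (pre n C) C)"
    proof (cases "x \<in> C")
      case True
      then have "x \<notin> D" using x unfolding symdiff_def by auto
      then obtain n where "x \<notin> pre n C" unfolding D_def by auto
      then show ?thesis using True unfolding symdiff_def by auto
    next
      case False
      then have "x \<in> D" using x unfolding symdiff_def by auto
      then obtain m where "x \<in> pre m C" unfolding D_def by auto
      then show ?thesis using False unfolding symdiff_def by auto
    qed
  qed
  moreover have "(\<Union>n. symdiff (pre n C) C) \<in> null_sets M"
  proof (rule null_sets_UN)
    fix n
    have "symdiff (pre n C) C \<in> sets M" using symd_s pre_sets C by auto
    then show "symdiff (pre n C) C \<in> null_sets M"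
      using preC[of n] unfolding d_def
      by (simp add: emeasure_eq_measure null_sets_def)
  qed
  ultimately have "symdiff D C \<in> null_sets M"
    using null_sets_subset symd_s Dsets C by blast
  then have DC: "d D C = 0" unfolding d_def by (simp add: emeasure_eq_measure null_sets_def)
  have "d A D \<le> d A C + d C D" by (rule tri) (auto simp: Asets C Dsets)
  then have "d A D = 0" using AC DC dsym dnn by (metis add_0 antisym)
  moreover have "D \<in> Sigma_inv M \<phi>" unfolding Sigma_inv_def using Dsets Dinv by auto
  ultimately show "A \<in> Sigma_inv_closure M \<phi>"
    unfolding Sigma_inv_closure_def d_def using Asets by blast
qed

end
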